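(* Let $v$ be a weight on $[0,1)$ satisfying $\lim_{r\to1^-}v(r)=0$. For each $t\in[0,1)$ both operators $C_t\colon H^\infty_v\to H^\infty_v$ and $C_t\colon H^0_v\to H^0_v$ are power bounded, uniformly mean ergodic, and not supercyclic.
   Context: $\mathbb{D}=\{z\in\mathbb{C}:|z|<1\}$ and $H(\mathbb{D})$ is the space of holomorphic functions on $\mathbb{D}$. A weight is a continuous non-increasing function $v\colon[0,1)\to(0,\infty)$, extended to $\mathbb{D}$ by $v(z):=v(|z|)$. $H^\infty_v=\{f\in H(\mathbb{D}):\|f\|_{\infty,v}:=\sup_{z\in\mathbb{D}}|f(z)|v(z)<\infty\}$ and $H^0_v=\{f\in H(\mathbb{D}):\lim_{|z|\to1^-}|f(z)|v(z)=0\}$, both with the norm $\|\cdot\|_{\infty,v}$. For $t\in[0,1]$, $C_t$ is defined on $f\in H(\mathbb{D})$ by $C_tf(0)=f(0)$ and $C_tf(z)=\frac{1}{z}\int_0^z\frac{f(\xi)}{1-t\xi}\,d\xi$ for $z\neq0$. A bounded operator $T$ on a Banach space $X$ is power bounded if $\sup_{n\in\mathbb{N}_0}\|T^n\|<\infty$; it is uniformly mean ergodic if the Cesàro means $T_{[n]}=\frac1n\sum_{m=1}^nT^m$ converge in operator norm; it is supercyclic if there is $z\in X$ such that $\{\lambda T^nz:\lambda\in\mathbb{C},n\in\mathbb{N}_0\}$ is dense in $X$. *)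

theory Defs
  imports "HOL-Complex_Analysis.Complex_Analysis"
begin

definition is_weight :: "(real \<Rightarrow> real) \<Rightarrow> bool" where
  "is_weight v \<longleftrightarrow> continuous_on {0..<1} v
     \<and> (\<forall>r s. 0 \<le> r \<longrightarrow> r \<le> s \<longrightarrow> s < 1 \<longrightarrow> v s \<le> v r)
     \<and> (\<forall>r. 0 \<le> r \<longrightarrow> r < 1 \<longrightarrow> v r > 0)"

definition wnorm :: "(real \<Rightarrow> real) \<Rightarrow> (complex \<Rightarrow> complex) \<Rightarrow> real" where
  "wnorm v f = (SUP z\<in>ball 0 1. cmod (f z) * v (cmod z))"

definition Hinf_v :: "(real \<Rightarrow> real) \<Rightarrow> (complex \<Rightarrow> complex) set" where
  "Hinf_v v = {f. f holomorphic_on ball 0 1 \<and>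
      (\<exists>M. \<forall>z\<in>ball 0 1. cmod (f z) * v (cmod z) \<le> M)}"

definition H0_v :: "(real \<Rightarrow> real) \<Rightarrow> (complex \<Rightarrow> complex) set" where
  "H0_v v = {f. f holomorphic_on ball 0 1 \<and>
      (\<forall>e>0. \<exists>r<1. \<forall>z. r < cmod z \<and> cmod z < 1 \<longrightarrow> cmod (f z) * v (cmod z) < e)}"

definition Cesaro_t :: "real \<Rightarrow> (complex \<Rightarrow> complex) \<Rightarrow> (complex \<Rightarrow> complex)" where
  "Cesaro_t t f = (\<lambda>z. if z = 0 then f 0
      else contour_integral (linepath 0 z) (\<lambda>\<xi>. f \<xi> / (1 - complex_of_real t * \<xi>)) / z)"

definition power_bounded_on ::
  "'a set \<Rightarrow> ('a \<Rightarrow> real) \<Rightarrow> ('a \<Rightarrow> 'a) \<Rightarrow> bool" where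
  "power_bounded_on X N T \<longleftrightarrow> (\<forall>f\<in>X. T f \<in> X) \<and>
     (\<exists>M. \<forall>n. \<forall>f\<in>X. N ((T ^^ n) f) \<le> M * N f)"

definition cesaro_mean :: "nat \<Rightarrow> ((complex \<Rightarrow> complex) \<Rightarrow> (complex \<Rightarrow> complex))
     \<Rightarrow> (complex \<Rightarrow> complex) \<Rightarrow> (complex \<Rightarrow> complex)" where
  "cesaro_mean n T f = (\<lambda>z. (\<Sum>m=1..n. (T ^^ m) f z) / of_nat n)"

definition uniformly_mean_ergodic_on ::
  "(complex \<Rightarrow> complex) set \<Rightarrow> ((complex \<Rightarrow> complex) \<Rightarrow> real)
     \<Rightarrow> ((complex \<Rightarrow> complex) \<Rightarrow> (complex \<Rightarrow> complex)) \<Rightarrow> bool" where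
  "uniformly_mean_ergodic_on X N T \<longleftrightarrow> (\<forall>f\<in>X. T f \<in> X) \<and>
     (\<exists>P. (\<forall>f\<in>X. P f \<in> X) \<and>
        (\<forall>e>0. \<exists>n0. \<forall>n\<ge>n0. \<forall>f\<in>X.
            N (\<lambda>z. cesaro_mean n T f z - P f z) \<le> e * N f))"

definition supercyclic_on ::
  "(complex \<Rightarrow> complex) set \<Rightarrow> ((complex \<Rightarrow> complex) \<Rightarrow> real)
     \<Rightarrow> ((complex \<Rightarrow> complex) \<Rightarrow> (complex \<Rightarrow> complex)) \<Rightarrow> bool" where
  "supercyclic_on X N T \<longleftrightarrow> (\<exists>g\<in>X. \<forall>f\<in>X. \<forall>e>0. \<exists>(c::complex) n.
       N (\<lambda>z. c * (T ^^ n) g z - f z) < e)"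

end

theory Submission
  imports Defs
begin

lemma den_ne:
  assumes "0 \<le> t" "t < 1" "norm \<xi> < 1"
  shows "1 - complex_of_real t * \<xi> \<noteq> 0"
proof
  assume "1 - complex_of_real t * \<xi> = 0"
  then have "norm (complex_of_real t * \<xi>) = 1" by (metis eq_iff_diff_eq_0 norm_one)
  moreover have "norm (complex_of_real t * \<xi>) < 1"
    using assms by (simp add: norm_mult) (metis abs_of_nonneg less_le_not_le mult_le_one less_le norm_ge_zero mult_less_cancel_right1 mult_strict_mono' mult_less_cancel_left2)
  ultimately show False by simp
qed

lemma den_ge:
  assumes "0 \<le> t" "t < 1" "norm \<xi> \<le> r"
  shows "1 - t * r \<le> norm (1 - complex_of_real t * \<xi>)"
proof -
  have "norm (complex_of_real t * \<xi>) \<le> t * r"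
    using assms by (simp add: norm_mult mult_left_mono)
  moreover have "1 - norm (complex_of_real t * \<xi>) \<le> norm (1 - complex_of_real t * \<xi>)"
    by (metis norm_one norm_triangle_ineq2)
  ultimately show ?thesis by linarith
qed

lemma prim:
  assumes holf: "f holomorphic_on ball 0 1" and x: "x \<in> ball 0 1"
  shows "((\<lambda>x. contour_integral (linepath 0 x) f) has_field_derivative f x) (at x)"
proof -
  have contf: "continuous_on (ball 0 1) f" using holf holomorphic_on_imp_continuous_on by blast
  have seg: "closed_segment 0 y \<subseteq> ball 0 1" if "y \<in> ball 0 1" for y :: complex
    using that by (meson centre_in_ball convex_ball convex_contains_segment zero_less_one)
  { fix b c :: complex
    assume "closed_segment b c \<subseteq> ball 0 1"
    then have "b \<in> ball 0 1" "c \<in> ball 0 1" by auto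
    then have abcs: "convex hull {0, b, c} \<subseteq> ball 0 1"
      by (intro hull_minimal) auto
    then have "(f has_contour_integral 0) (linepath 0 b +++ linepath b c +++ linepath c 0)"
      by (intro Cauchy_theorem_triangle holomorphic_on_subset[OF holf])
  } note 0 = this
  show ?thesis
    using 0 x seg contf has_chain_integral_chain_integral3 triangle_contour_integrals_starlike_primitive[of "ball 0 1" f 0 x]
    by force
qed

lemma C_zero [simp]: "Cesaro_t t f 0 = f 0"
  by (simp add: Cesaro_t_def)

lemma C_holo:
  assumes t: "0 \<le> t" "t < 1" and holf: "f holomorphic_on ball 0 1"
  shows "Cesaro_t t f holomorphic_on ball 0 1"
proof -
  define g where "g = (\<lambda>\<xi>. f \<xi> / (1 - complex_of_real t * \<xi>))"
  have gh: "g holomorphic_on ball 0 1"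
    unfolding g_def using t den_ne holf by (auto intro!: holomorphic_intros)
  define F where "F = (\<lambda>z. contour_integral (linepath 0 z) g)"
  have Fd: "(F has_field_derivative g x) (at x)" if "x \<in> ball 0 1" for x
    unfolding F_def using prim[OF gh that] .
  have Fh: "F holomorphic_on ball 0 1"
    unfolding holomorphic_on_open[OF open_ball] using Fd by blast
  have d0: "deriv (\<lambda>z. contour_integral (linepath 0 z) (\<lambda>\<xi>. f \<xi> / (1 - complex_of_real t * \<xi>))) 0 = f 0"
    using Fd[of 0] DERIV_imp_deriv unfolding F_def g_def by force
  have F0: "F 0 = 0" by (simp add: F_def)
  have "(\<lambda>z. if z = 0 then deriv F 0 else (F z - F 0) / (z - 0)) holomorphic_on ball 0 1"
    by (rule pole_lemma[OF Fh]) simp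
  then show ?thesis
  proof (rule holomorphic_transform)
    fix x assume "x \<in> ball (0::complex) 1"
    show "(if x = 0 then deriv F 0 else (F x - F 0) / (x - 0)) = Cesaro_t t f x"
      using d0 by (cases "x = 0") (simp_all add: Cesaro_t_def F_def g_def)
  qed
qed

lemma C_integral:
  "Cesaro_t t h z = (if z = 0 then h 0 else
     integral {0..1} (\<lambda>s. h (complex_of_real s * z) / (1 - complex_of_real t * (complex_of_real s * z)) * z) / z)"
  by (simp add: Cesaro_t_def contour_integral_integral linepath_def scaleR_conv_of_real)

lemma majorant:
  assumes t: "0 \<le> t" "t < 1" and hc: "continuous_on (ball 0 1) h" and mc: "continuous_on (ball 0 1) m"
   and z: "z \<in> ball 0 1"
   and bd: "\<And>s. 0 \<le> s \<Longrightarrow> s \<le> 1 \<Longrightarrow> norm (h (complex_of_real s * z)) \<le> c * Re (m (complex_of_real (s * norm z)))"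
  shows "norm (Cesaro_t t h z) \<le> c * Re (Cesaro_t t m (complex_of_real (norm z)))"
proof (cases "z = 0")
  case True
  then show ?thesis using bd[of 0] by simp
next
  case False
  define r where "r = norm z"
  have r: "0 < r" "r < 1" using False z by (auto simp: r_def)
  define H where "H = (\<lambda>s. h (complex_of_real s * z) / (1 - complex_of_real t * (complex_of_real s * z)) * z)"
  define M where "M = (\<lambda>s. m (complex_of_real s * of_real r) / (1 - complex_of_real t * (complex_of_real s * of_real r)) * of_real r)"
  have inball: "complex_of_real s * w \<in> ball 0 1" if "0 \<le> s" "s \<le> 1" "w \<in> ball 0 1" for s w
    using that by (simp add: norm_mult) (metis abs_of_nonneg mult_le_one norm_ge_zero less_le not_le order.trans mult_less_cancel_left1 mult_le_cancel_left1 mult_less_le_imp_less zero_less_one_class.zero_le_one)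
  have rball: "complex_of_real r \<in> ball 0 1" using r by simp
  have Hc: "continuous_on {0..1} H"
    unfolding H_def
    apply (intro continuous_intros continuous_on_compose2[OF hc])
    using inball z den_ne[OF t] by (auto simp: norm_mult)
  have Mc: "continuous_on {0..1} M"
  proof -
    have a: "complex_of_real x * complex_of_real r \<in> ball 0 1" if "x \<in> {0..1}" for x
      using inball[OF _ _ rball, of x] that by auto
    have b: "1 - complex_of_real t * (complex_of_real x * complex_of_real r) \<noteq> 0" if "x \<in> {0..1}" for x
      using a[OF that] den_ne[OF t] by auto
    show ?thesis unfolding M_def
      by (intro continuous_intros continuous_on_compose2[OF mc]) (use a b in auto)
  qed
  have Hi: "H integrable_on {0..1}" using Hc integrable_continuous_interval by blast
  have Mi: "(M has_integral integral {0..1} M) {0..1}" using Mc integrable_continuous_interval by blast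
  have Gi: "((\<lambda>s. c * Re (M s)) has_integral c * Re (integral {0..1} M)) {0..1}"
    using has_integral_mult_right[OF has_integral_Re[OF Mi]] .
  have le: "norm (H s) \<le> c * Re (M s)" if s: "s \<in> {0..1}" for s
  proof -
    have 1: "1 - t * (s * r) \<le> norm (1 - complex_of_real t * (complex_of_real s * z))"
      using den_ge[OF t, of "complex_of_real s * z" "s*r"] s by (auto simp: norm_mult r_def)
    have 2: "0 < 1 - t * (s * r)"
    proof -
      have "s*r \<le> r" using s r by (simp add: mult_left_le_one_le)
      moreover have "t*(s*r) \<le> s*r" using t s r by (simp add: mult_left_le_one_le)
      ultimately show ?thesis using r by linarith
    qed
    have hb: "norm (h (complex_of_real s * z)) \<le> c * Re (m (complex_of_real (s * r)))"
      using bd s by (auto simp: r_def)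
    have "norm (H s) = norm (h (complex_of_real s * z)) / norm (1 - complex_of_real t * (complex_of_real s * z)) * r"
      by (simp add: H_def norm_mult norm_divide r_def)
    also have "\<dots> \<le> c * Re (m (complex_of_real (s * r))) / (1 - t * (s * r)) * r"
    proof -
      have "0 \<le> c * Re (m (complex_of_real (s * r)))" using hb norm_ge_zero order_trans by blast
      then show ?thesis using 1 2 hb r by (intro mult_right_mono frac_le) auto
    qed
    also have "\<dots> = c * Re (M s)"
    proof -
      have "M s = m (complex_of_real (s * r)) / complex_of_real (1 - t * (s * r)) * of_real r"
        by (simp add: M_def)
      then show ?thesis by (simp add: Re_divide_of_real)
    qed
    finally show ?thesis .
  qed
  have "norm (integral {0..1} H) \<le> c * Re (integral {0..1} M)"
    using integral_norm_bound_integral[OF Hi _ le] Gi by (metis has_integral_integrable integral_unique)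
  then have "norm (integral {0..1} H) / r \<le> c * Re (integral {0..1} M) / r"
    using r by (simp add: divide_right_mono)
  moreover have "norm (Cesaro_t t h z) = norm (integral {0..1} H) / r"
    using False by (simp add: C_integral H_def norm_divide r_def)
  moreover have "Cesaro_t t m (complex_of_real (norm z)) = integral {0..1} M / of_real r"
    using False r by (simp add: C_integral M_def r_def)
  ultimately show ?thesis by (simp add: Re_divide_of_real)
qed

lemma seg_ball: "z \<in> ball 0 1 \<Longrightarrow> closed_segment 0 z \<subseteq> ball (0::complex) 1"
  by (meson centre_in_ball convex_ball convex_contains_segment zero_less_one)

lemma C_cong:
  assumes "\<And>w. w \<in> ball 0 1 \<Longrightarrow> f w = g w" "z \<in> ball 0 1"
  shows "Cesaro_t t f z = Cesaro_t t g z"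
proof -
  have "contour_integral (linepath 0 z) (\<lambda>\<xi>. f \<xi> / (1 - complex_of_real t * \<xi>))
      = contour_integral (linepath 0 z) (\<lambda>\<xi>. g \<xi> / (1 - complex_of_real t * \<xi>))"
    by (rule contour_integral_cong) (use assms seg_ball[OF assms(2)] in auto)
  then show ?thesis using assms by (simp add: Cesaro_t_def)
qed

lemma C_lin:
  assumes t: "0 \<le> t" "t < 1" and fc: "continuous_on (ball 0 1) f" and gc: "continuous_on (ball 0 1) g"
    and z: "z \<in> ball 0 1"
  shows "Cesaro_t t (\<lambda>w. f w - c * g w) z = Cesaro_t t f z - c * Cesaro_t t g z"
proof (cases "z = 0")
  case True then show ?thesis by simp
next
  case False
  have sub: "closed_segment 0 z \<subseteq> ball 0 1" using seg_ball z by blast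
  have dn: "1 - complex_of_real t * \<xi> \<noteq> 0" if "\<xi> \<in> closed_segment 0 z" for \<xi>
    using den_ne[OF t] sub that by auto
  have i1: "(\<lambda>\<xi>. f \<xi> / (1 - complex_of_real t * \<xi>)) contour_integrable_on linepath 0 z"
    by (intro contour_integrable_continuous_linepath continuous_intros continuous_on_subset[OF fc sub]) (use dn in auto)
  have i2: "(\<lambda>\<xi>. g \<xi> / (1 - complex_of_real t * \<xi>)) contour_integrable_on linepath 0 z"
    by (intro contour_integrable_continuous_linepath continuous_intros continuous_on_subset[OF gc sub]) (use dn in auto)
  have "contour_integral (linepath 0 z) (\<lambda>\<xi>. (f \<xi> - c * g \<xi>) / (1 - complex_of_real t * \<xi>))
     = contour_integral (linepath 0 z) (\<lambda>\<xi>. f \<xi> / (1 - complex_of_real t * \<xi>) - c * (g \<xi> / (1 - complex_of_real t * \<xi>)))"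
    by (simp add: diff_divide_distrib)
  also have "\<dots> = contour_integral (linepath 0 z) (\<lambda>\<xi>. f \<xi> / (1 - complex_of_real t * \<xi>))
      - c * contour_integral (linepath 0 z) (\<lambda>\<xi>. g \<xi> / (1 - complex_of_real t * \<xi>))"
    using contour_integral_diff[OF i1 contour_integrable_lmul[OF i2, of c]] contour_integral_lmul[OF i2, of c]
    by simp
  finally show ?thesis using False by (simp add: Cesaro_t_def diff_divide_distrib)
qed

definition phi :: "real \<Rightarrow> complex \<Rightarrow> complex" where
  "phi t z = 1 / (1 - complex_of_real t * z)"

definition eone :: "real \<Rightarrow> complex \<Rightarrow> complex" where
  "eone t z = z / (1 - complex_of_real t * z)^2"

lemma phi_holo: "0 \<le> t \<Longrightarrow> t < 1 \<Longrightarrow> phi t holomorphic_on ball 0 1"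
  unfolding phi_def using den_ne by (auto intro!: holomorphic_intros)

lemma eone_holo: "0 \<le> t \<Longrightarrow> t < 1 \<Longrightarrow> eone t holomorphic_on ball 0 1"
  unfolding eone_def using den_ne by (auto intro!: holomorphic_intros)

lemma C_prim:
  assumes "\<And>x. x \<in> ball 0 1 \<Longrightarrow> (P has_field_derivative (g x / (1 - complex_of_real t * x))) (at x)"
    and z: "z \<in> ball 0 1" "z \<noteq> 0"
  shows "Cesaro_t t g z = (P z - P 0) / z"
proof -
  have "\<And>x. x \<in> ball 0 1 \<Longrightarrow> (P has_field_derivative g x / (1 - complex_of_real t * x)) (at x within ball 0 1)"
    using assms(1) has_field_derivative_at_within by blast
  then have "((\<lambda>x. g x / (1 - complex_of_real t * x)) has_contour_integral (P (pathfinish (linepath 0 z)) - P (pathstart (linepath 0 z)))) (linepath 0 z)"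
    by (rule contour_integral_primitive[OF _ valid_path_linepath]) (use seg_ball[OF z(1)] in simp_all)
  then have "((\<lambda>x. g x / (1 - complex_of_real t * x)) has_contour_integral (P z - P 0)) (linepath 0 z)"
    by simp
  then show ?thesis using z by (simp add: Cesaro_t_def contour_integral_unique)
qed

lemma C_phi:
  assumes t: "0 \<le> t" "t < 1" and z: "z \<in> ball 0 1"
  shows "Cesaro_t t (phi t) z = phi t z"
proof (cases "z = 0")
  case True then show ?thesis by simp
next
  case False
  have "((\<lambda>x. x / (1 - complex_of_real t * x)) has_field_derivative (phi t x / (1 - complex_of_real t * x))) (at x)"
    if "x \<in> ball 0 1" for x
  proof -
    have d: "1 - complex_of_real t * x \<noteq> 0" using den_ne[OF t] that by simp
    show ?thesis unfolding phi_def
      apply (rule derivative_eq_intros refl)+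
      using d apply (simp add:  divide_simps power2_eq_square)
      apply (simp add: algebra_simps)?
      done
  qed
  then have "Cesaro_t t (phi t) z = (z / (1 - complex_of_real t * z) - 0 / (1 - complex_of_real t * 0)) / z"
    by (rule C_prim[OF _ z False])
  then show ?thesis using False by (simp add: phi_def)
qed

lemma alg_eone:
  fixes x c :: complex assumes d: "1 - x*c \<noteq> 0"
  shows "(c * (4 * x\<^sup>2) + x * (4 * (1 - x*c)\<^sup>2) - x * (c * (c * (4 * x\<^sup>2)))) / (4 * (1 - x*c) ^ 4)
     = x / ((1 - x*c)\<^sup>2 - x * (c * (1 - x*c)\<^sup>2))"
proof -
  have n: "c * (4 * x\<^sup>2) + x * (4 * (1 - x*c)\<^sup>2) - x * (c * (c * (4 * x\<^sup>2))) = 4 * x * (1 - x*c)"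
    by algebra
  have m: "(1 - x*c)\<^sup>2 - x * (c * (1 - x*c)\<^sup>2) = (1 - x*c)^3" by algebra
  show ?thesis unfolding n m using d by (simp add: divide_simps) algebra
qed

lemma C_eone:
  assumes t: "0 \<le> t" "t < 1" and z: "z \<in> ball 0 1"
  shows "Cesaro_t t (eone t) z = eone t z / 2"
proof (cases "z = 0")
  case True then show ?thesis by (simp add: eone_def)
next
  case False
  have "((\<lambda>x. x^2 / (2 * (1 - complex_of_real t * x)^2)) has_field_derivative (eone t x / (1 - complex_of_real t * x))) (at x)"
    if "x \<in> ball 0 1" for x
  proof -
    have d: "1 - complex_of_real t * x \<noteq> 0" using den_ne[OF t] that by simp
    show ?thesis unfolding eone_def
      apply (rule derivative_eq_intros refl)+
      using d apply (simp add:  divide_simps power2_eq_square)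
      apply (simp add: algebra_simps)?
      apply (rule alg_eone)
      using d apply (simp add: mult.commute)
      done
  qed
  then have "Cesaro_t t (eone t) z = (z^2 / (2 * (1 - complex_of_real t * z)^2) - 0^2 / (2 * (1 - complex_of_real t * 0)^2)) / z"
    by (rule C_prim[OF _ z False])
  then show ?thesis using False by (simp add: eone_def power2_eq_square)
qed

lemma iter_holo:
  assumes t: "0 \<le> t" "t < 1" and hh: "h holomorphic_on ball 0 1"
  shows "(Cesaro_t t ^^ n) h holomorphic_on ball 0 1"
  by (induction n) (auto intro: C_holo[OF t] simp: hh)

lemma iter_zero: "(Cesaro_t t ^^ n) h 0 = h 0"
  by (induction n) auto

lemma iter_bound:
  assumes t: "0 \<le> t" "t < 1" and mh: "m holomorphic_on ball 0 1"
   and eig: "\<And>x. 0 \<le> x \<Longrightarrow> x < 1 \<Longrightarrow> Re (Cesaro_t t m (complex_of_real x)) = q * Re (m (complex_of_real x))"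
   and hh: "h holomorphic_on ball 0 1" and \<rho>: "\<rho> < 1"
   and bd: "\<And>w. norm w \<le> \<rho> \<Longrightarrow> norm (h w) \<le> c * Re (m (complex_of_real (norm w)))"
   and w: "norm w \<le> \<rho>"
  shows "norm ((Cesaro_t t ^^ n) h w) \<le> c * q^n * Re (m (complex_of_real (norm w)))"
  using w
proof (induction n arbitrary: w)
  case 0 then show ?case using bd by simp
next
  case (Suc n)
  have w: "w \<in> ball 0 1" using Suc.prems \<rho> by simp
  have "norm ((Cesaro_t t ^^ Suc n) h w) = norm (Cesaro_t t ((Cesaro_t t ^^ n) h) w)" by simp
  also have "\<dots> \<le> c * q^n * Re (Cesaro_t t m (complex_of_real (norm w)))"
  proof (rule majorant[OF t _ _ w])
    show "continuous_on (ball 0 1) ((Cesaro_t t ^^ n) h)"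
      using iter_holo[OF t hh] holomorphic_on_imp_continuous_on by blast
    show "continuous_on (ball 0 1) m"
      using mh holomorphic_on_imp_continuous_on by blast
    fix s :: real assume s: "0 \<le> s" "s \<le> 1"
    have "norm (complex_of_real s * w) \<le> norm w"
      using s by (simp add: norm_mult mult_left_le_one_le)
    then have "norm (complex_of_real s * w) \<le> \<rho>" using Suc.prems by linarith
    then show "norm ((Cesaro_t t ^^ n) h (complex_of_real s * w)) \<le> c * q^n * Re (m (complex_of_real (s * norm w)))"
      using Suc.IH[of "complex_of_real s * w"] s by (simp add: norm_mult)
  qed
  also have "\<dots> = c * q^Suc n * Re (m (complex_of_real (norm w)))"
    using eig[of "norm w"] w by simp
  finally show ?case .
qed

lemma phi_real: "phi t (complex_of_real x) = complex_of_real (1 / (1 - t * x))"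
  by (simp add: phi_def)

lemma eone_real: "eone t (complex_of_real x) = complex_of_real (x / (1 - t * x)^2)"
  by (simp add: eone_def)

lemma tx_pos: "0 \<le> (t::real) \<Longrightarrow> t < 1 \<Longrightarrow> 0 \<le> x \<Longrightarrow> x < 1 \<Longrightarrow> 0 < 1 - t * x \<and> 1 - t * x \<le> 1 \<and> 1 - t \<le> 1 - t * x"
proof -
  assume a: "0 \<le> t" "t < 1" "0 \<le> x" "x < 1"
  have "t * x \<le> t" using a mult_left_mono[of x 1 t] by simp
  moreover have "0 \<le> t * x" using a by simp
  ultimately show ?thesis using a by linarith
qed

lemma phi_eig:
  assumes t: "0 \<le> t" "t < 1"
  shows "\<And>x. 0 \<le> x \<Longrightarrow> x < 1 \<Longrightarrow> Re (Cesaro_t t (phi t) (complex_of_real x)) = 1 * Re (phi t (complex_of_real x))"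
  using C_phi[OF t] by simp

lemma eone_eig:
  assumes t: "0 \<le> t" "t < 1"
  shows "\<And>x. 0 \<le> x \<Longrightarrow> x < 1 \<Longrightarrow> Re (Cesaro_t t (eone t) (complex_of_real x)) = (1/2) * Re (eone t (complex_of_real x))"
proof -
  fix x :: real assume "0 \<le> x" "x < 1"
  then have eq: "Cesaro_t t (eone t) (complex_of_real x) = eone t (complex_of_real x) / 2"
    using C_eone[OF t] by simp
  show "Re (Cesaro_t t (eone t) (complex_of_real x)) = (1/2) * Re (eone t (complex_of_real x))"
    using arg_cong[OF eq, of Re] by simp
qed

lemma iter_lin:
  assumes t: "0 \<le> t" "t < 1" and fh: "f holomorphic_on ball 0 1" and z: "z \<in> ball 0 1"
  shows "(Cesaro_t t ^^ n) (\<lambda>w. f w - c * phi t w) z = (Cesaro_t t ^^ n) f z - c * phi t z"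
  using z
proof (induction n arbitrary: z)
  case 0 then show ?case by simp
next
  case (Suc n)
  have "(Cesaro_t t ^^ Suc n) (\<lambda>w. f w - c * phi t w) z
      = Cesaro_t t (\<lambda>w. (Cesaro_t t ^^ n) f w - c * phi t w) z"
    using C_cong[OF Suc.IH Suc.prems] by simp
  also have "\<dots> = Cesaro_t t ((Cesaro_t t ^^ n) f) z - c * Cesaro_t t (phi t) z"
    by (rule C_lin[OF t _ _ Suc.prems])
       (use iter_holo[OF t fh] phi_holo[OF t] holomorphic_on_imp_continuous_on in blast)+
  also have "\<dots> = (Cesaro_t t ^^ Suc n) f z - c * phi t z"
    using C_phi[OF t Suc.prems] by simp
  finally show ?case .
qed

lemma schwarz_scaled:
  assumes gh: "g holomorphic_on ball 0 1" and g0: "g 0 = 0" and R: "0 < R" "R < 1"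
    and bd: "\<And>w. norm w \<le> R \<Longrightarrow> norm (g w) \<le> B"
    and w: "norm w \<le> R"
  shows "norm (g w) \<le> 2 * B * norm w / R"
proof -
  have B0: "0 \<le> B" using bd[of 0] R g0 by simp
  show ?thesis
  proof (cases "B = 0")
    case True then show ?thesis using bd[OF w] by simp
  next
    case False
    then have Bp: "0 < B" using B0 by simp
    define G where "G = (\<lambda>u. g (complex_of_real R * u) / complex_of_real (2 * B))"
    have Ru: "R * norm u < 1" if "norm u < 1" for u :: complex
      using R that mult_left_le_one_le[of "norm u" R] by simp
    have "(g \<circ> (\<lambda>u. complex_of_real R * u)) holomorphic_on ball 0 1"
      by (rule holomorphic_on_compose_gen[OF _ gh]) (use R Ru in \<open>auto intro!: holomorphic_intros simp: norm_mult\<close>)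
    then have Gh: "G holomorphic_on ball 0 1"
      unfolding G_def o_def using Bp by (intro holomorphic_intros) auto
    show ?thesis
    proof (cases "norm w < R")
      case True
      define u where "u = w / complex_of_real R"
      have u: "norm u < 1" using True R by (simp add: u_def norm_divide)
      have "norm (G \<xi>) < 1" if "norm \<xi> < 1" for \<xi>
      proof -
        have "norm (complex_of_real R * \<xi>) \<le> R" using that R by (simp add: norm_mult)
        then have "norm (g (complex_of_real R * \<xi>)) \<le> B" by (rule bd)
        then show ?thesis using Bp by (simp add: G_def norm_divide)
      qed
      then have "norm (G u) \<le> norm u"
        using Schwarz_Lemma(1)[OF Gh _ _ u] g0 by (simp add: G_def)
      moreover have "G u = g w / complex_of_real (2 * B)" using R by (simp add: G_def u_def)
      ultimately have "norm (g w) / (2 * B) \<le> norm w / R"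
        using R Bp by (simp add: norm_divide u_def)
      then show ?thesis using R Bp by (simp add: field_simps)
    next
      case False
      then have "norm w = R" using w by simp
      then show ?thesis using bd[OF w] R B0 by simp
    qed
  qed
qed

lemma wt_mono: "is_weight v \<Longrightarrow> 0 \<le> r \<Longrightarrow> r \<le> s \<Longrightarrow> s < 1 \<Longrightarrow> v s \<le> v r"
  by (simp add: is_weight_def)

lemma wt_pos: "is_weight v \<Longrightarrow> 0 \<le> r \<Longrightarrow> r < 1 \<Longrightarrow> 0 < v r"
  by (simp add: is_weight_def)

lemma wn_upper:
  assumes "\<And>z. z \<in> ball 0 1 \<Longrightarrow> cmod (h z) * v (cmod z) \<le> M" "z \<in> ball 0 1"
  shows "cmod (h z) * v (cmod z) \<le> wnorm v h"
proof -
  have "bdd_above ((\<lambda>z. cmod (h z) * v (cmod z)) ` ball 0 1)"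
    by (rule bdd_aboveI2[of _ _ M]) (rule assms(1))
  then show ?thesis unfolding wnorm_def by (rule cSUP_upper[OF assms(2)])
qed

lemma Hinf_upper:
  assumes "f \<in> Hinf_v v" "z \<in> ball 0 1"
  shows "cmod (f z) * v (cmod z) \<le> wnorm v f"
proof -
  obtain M where "\<forall>z\<in>ball 0 1. cmod (f z) * v (cmod z) \<le> M" using assms(1) by (auto simp: Hinf_v_def)
  then show ?thesis using wn_upper assms(2) by blast
qed

lemma wn_least:
  assumes "\<And>z. z \<in> ball 0 1 \<Longrightarrow> cmod (h z) * v (cmod z) \<le> K"
  shows "wnorm v h \<le> K"
  unfolding wnorm_def by (rule cSUP_least) (use assms in auto)

lemma wn_nonneg:
  assumes "is_weight v" "f \<in> Hinf_v v"
  shows "0 \<le> wnorm v f"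
proof -
  have "0 \<le> cmod (f 0) * v (cmod 0)" using wt_pos[OF assms(1), of 0] by simp
  also have "\<dots> \<le> wnorm v f" using Hinf_upper[OF assms(2), of 0] by simp
  finally show ?thesis .
qed

lemma f_bound:
  assumes w: "is_weight v" and f: "f \<in> Hinf_v v" and "norm z \<le> \<rho>" "\<rho> < 1"
  shows "cmod (f z) \<le> wnorm v f / v \<rho>"
proof -
  have "0 \<le> \<rho>" using assms(3) norm_ge_zero order_trans by blast
  then have vp: "0 < v \<rho>" using wt_pos[OF w, of \<rho>] assms by simp
  have "cmod (f z) * v \<rho> \<le> cmod (f z) * v (cmod z)"
    using wt_mono[OF w, of "cmod z" \<rho>] assms by (simp add: mult_left_mono)
  also have "\<dots> \<le> wnorm v f" using Hinf_upper[OF f, of z] assms by simp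
  finally show ?thesis using vp by (simp add: field_simps)
qed

lemma Hinf_holo: "f \<in> Hinf_v v \<Longrightarrow> f holomorphic_on ball 0 1"
  by (simp add: Hinf_v_def)

lemma pb_point:
  assumes w: "is_weight v" and t: "0 \<le> t" "t < 1" and f: "f \<in> Hinf_v v" and z: "z \<in> ball 0 1"
  shows "cmod ((Cesaro_t t ^^ n) f z) * v (cmod z) \<le> wnorm v f / (1 - t)"
proof -
  define \<rho> where "\<rho> = cmod z"
  have \<rho>: "0 \<le> \<rho>" "\<rho> < 1" using z by (auto simp: \<rho>_def)
  have vp: "0 < v \<rho>" using wt_pos[OF w] \<rho> by simp
  define B where "B = wnorm v f / v \<rho>"
  have B0: "0 \<le> B" using wn_nonneg[OF w f] vp by (simp add: B_def)
  have bd: "cmod (f w) \<le> B * Re (phi t (complex_of_real (cmod w)))" if wr: "cmod w \<le> \<rho>" for w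
  proof -
    have "cmod (f w) \<le> B" unfolding B_def by (rule f_bound[OF assms(1) f wr \<rho>(2)])
    also have "\<dots> \<le> B * Re (phi t (complex_of_real (cmod w)))"
    proof -
      have "0 < 1 - t * cmod w" "1 - t * cmod w \<le> 1" using tx_pos[OF t, of "cmod w"] wr \<rho> by auto
      then have "1 \<le> 1 / (1 - t * cmod w)" by simp
      then have "B * 1 \<le> B * (1 / (1 - t * cmod w))" using B0 by (rule mult_left_mono)
      then show ?thesis by (simp add: phi_real)
    qed
    finally show ?thesis .
  qed
  have zr: "cmod z \<le> \<rho>" by (simp add: \<rho>_def)
  have "cmod ((Cesaro_t t ^^ n) f z) \<le> B * 1^n * Re (phi t (complex_of_real (cmod z)))"
    by (rule iter_bound[OF t phi_holo[OF t] phi_eig[OF t] Hinf_holo[OF f] \<rho>(2) bd zr])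
  also have "\<dots> = B / (1 - t * \<rho>)" by (simp add: phi_real \<rho>_def)
  also have "\<dots> \<le> B / (1 - t)"
    using tx_pos[OF t \<rho>] B0 t by (intro divide_left_mono) (auto intro!: mult_pos_pos)
  finally have "cmod ((Cesaro_t t ^^ n) f z) * v \<rho> \<le> B / (1 - t) * v \<rho>"
    using vp by (intro mult_right_mono) auto
  also have "\<dots> = wnorm v f / (1 - t)" using vp by (simp add: B_def)
  finally show ?thesis by (simp add: \<rho>_def)
qed

lemma phi_norm:
  assumes t: "0 \<le> t" "t < 1" and w: "cmod w < 1"
  shows "cmod (phi t w) \<le> 1 / (1 - t)"
proof -
  have "1 - t * cmod w \<le> cmod (1 - complex_of_real t * w)" by (rule den_ge[OF t order_refl])
  moreover have "1 - t \<le> 1 - t * cmod w" "0 < 1 - t" using tx_pos[OF t, of "cmod w"] w t by auto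
  ultimately have "1 - t \<le> cmod (1 - complex_of_real t * w)" by linarith
  then show ?thesis using t by (simp add: phi_def norm_divide frac_le)
qed

lemma me_point:
  assumes w: "is_weight v" and t: "0 \<le> t" "t < 1" and f: "f \<in> Hinf_v v" and z: "z \<in> ball 0 1"
  shows "cmod ((Cesaro_t t ^^ n) f z - f 0 * phi t z) * v (cmod z)
     \<le> (2 * (v 0 / v (1/2)) * (1 + 1 / (1 - t)) / (1 - t)^2) * (1/2)^n * wnorm v f"
proof -
  define N where "N = wnorm v f"
  have N0: "0 \<le> N" using wn_nonneg[OF w f] by (simp add: N_def)
  define g where "g = (\<lambda>w. f w - f 0 * phi t w)"
  have fh: "f holomorphic_on ball 0 1" using Hinf_holo[OF f] .
  have gh: "g holomorphic_on ball 0 1" unfolding g_def using fh phi_holo[OF t] by (intro holomorphic_intros)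
  have g0: "g 0 = 0" by (simp add: g_def phi_def)
  have it: "(Cesaro_t t ^^ n) g z = (Cesaro_t t ^^ n) f z - f 0 * phi t z"
    unfolding g_def by (rule iter_lin[OF t fh z])
  define R where "R = max (cmod z) (1/2)"
  have R: "0 < R" "R < 1" "cmod z \<le> R" "1/2 \<le> R" using z by (auto simp: R_def)
  have vR: "0 < v R" using wt_pos[OF w] R by simp
  have v0: "0 < v 0" using wt_pos[OF w] by simp
  have vh: "0 < v (1/2)" using wt_pos[OF w] by simp
  have vRle: "v R \<le> v 0" using wt_mono[OF w, of 0 R] R by simp
  define B where "B = N / v R * (1 + 1 / (1 - t))"
  have B0: "0 \<le> B" using N0 vR t by (simp add: B_def)
  have bdg: "cmod (g w) \<le> B" if wr: "cmod w \<le> R" for w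
  proof -
    have 1: "cmod (f w) \<le> N / v R" unfolding N_def by (rule f_bound[OF w f wr R(2)])
    have "cmod (f 0) \<le> N / v 0" unfolding N_def by (rule f_bound[OF w f]) auto
    also have "\<dots> \<le> N / v R" using N0 vR vRle by (intro divide_left_mono) auto
    finally have 2: "cmod (f 0) \<le> N / v R" .
    have 3: "cmod (phi t w) \<le> 1 / (1 - t)" using phi_norm[OF t] wr R by simp
    have "cmod (g w) \<le> cmod (f w) + cmod (f 0) * cmod (phi t w)"
      unfolding g_def by (metis norm_mult norm_triangle_ineq4)
    also have "\<dots> \<le> N / v R + N / v R * (1 / (1 - t))"
      using 1 2 3 N0 vR by (intro add_mono mult_mono) auto
    also have "\<dots> = B" by (simp add: B_def algebra_simps)
    finally show ?thesis .
  qed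
  have bd: "cmod (g w) \<le> (2 * B / R) * Re (eone t (complex_of_real (cmod w)))" if wr: "cmod w \<le> R" for w
  proof -
    have "cmod (g w) \<le> 2 * B * cmod w / R" by (rule schwarz_scaled[OF gh g0 R(1,2) bdg wr])
    also have "\<dots> = (2 * B / R) * cmod w" by simp
    also have "\<dots> \<le> (2 * B / R) * (cmod w / (1 - t * cmod w)^2)"
    proof (rule mult_left_mono)
      have "0 < 1 - t * cmod w" "1 - t * cmod w \<le> 1" using tx_pos[OF t, of "cmod w"] wr R by auto
      then have "0 < (1 - t * cmod w)^2" "(1 - t * cmod w)^2 \<le> 1"
        by (auto simp: power_le_one)
      moreover have "cmod w * (1 - t * cmod w)^2 \<le> cmod w"
        using calculation(2) by (simp add: mult_left_le)
      ultimately show "cmod w \<le> cmod w / (1 - t * cmod w)^2"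
        by (simp add: le_divide_eq)
      show "0 \<le> 2 * B / R" using B0 R by simp
    qed
    finally show ?thesis by (simp add: eone_real)
  qed
  have zr: "cmod z \<le> R" using R by simp
  have "cmod ((Cesaro_t t ^^ n) g z) \<le> (2 * B / R) * (1/2)^n * Re (eone t (complex_of_real (cmod z)))"
    by (rule iter_bound[OF t eone_holo[OF t] eone_eig[OF t] gh R(2) bd zr])
  also have "\<dots> = (2 * B / R) * (1/2)^n * (cmod z / (1 - t * cmod z)^2)" by (simp add: eone_real)
  also have "\<dots> \<le> (2 * B / R) * (1/2)^n * (cmod z / (1 - t)^2)"
  proof (rule mult_left_mono)
    have "0 < 1 - t" "1 - t \<le> 1 - t * cmod z" using tx_pos[OF t, of "cmod z"] z t by auto
    then have p: "(1 - t)^2 \<le> (1 - t * cmod z)^2" "0 < (1 - t)^2" by (auto intro: power_mono)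
    then have "0 < (1 - t * cmod z)^2" by linarith
    then show "cmod z / (1 - t * cmod z)^2 \<le> cmod z / (1 - t)^2"
      using p by (intro divide_left_mono) (auto intro: mult_pos_pos)
    show "0 \<le> 2 * B / R * (1 / 2) ^ n" using B0 R by simp
  qed
  finally have m1: "cmod ((Cesaro_t t ^^ n) g z) \<le> (2 * B / R) * (1/2)^n * (cmod z / (1 - t)^2)" .
  define Q where "Q = 2 * N * (1 + 1 / (1 - t)) * (1/2)^n / (1 - t)^2"
  have Q0: "0 \<le> Q" using N0 t by (simp add: Q_def)
  have ratio: "v (cmod z) * cmod z \<le> (v 0 / v (1/2)) * (v R * R)"
  proof (cases "cmod z \<ge> 1/2")
    case True
    then have "R = cmod z" by (simp add: R_def)
    moreover have "1 \<le> v 0 / v (1/2)" using wt_mono[OF w, of 0 "1/2"] vh by simp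
    moreover have "0 \<le> v R * R" using vR R by simp
    ultimately have "1 * (v R * R) \<le> (v 0 / v (1/2)) * (v R * R)" by (intro mult_right_mono) auto
    then show ?thesis using \<open>R = cmod z\<close> by (simp add: mult.commute)
  next
    case False
    then have "R = 1/2" by (simp add: R_def)
    moreover have "v (cmod z) \<le> v 0" using wt_mono[OF w, of 0 "cmod z"] z by simp
    moreover have "v (cmod z) * cmod z \<le> v 0 * (1/2)"
      using calculation(2) False wt_pos[OF w, of "cmod z"] z by (intro mult_mono) auto
    then show ?thesis unfolding \<open>R = 1/2\<close> using vh by simp
  qed
  have "cmod ((Cesaro_t t ^^ n) g z) * v (cmod z) \<le> (2 * B / R) * (1/2)^n * (cmod z / (1 - t)^2) * v (cmod z)"
    using m1 wt_pos[OF w, of "cmod z"] z by (intro mult_right_mono) auto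
  also have "\<dots> = Q * ((v (cmod z) * cmod z) / (v R * R))"
    using vR R by (simp add: Q_def B_def field_simps)
  also have "\<dots> \<le> Q * (v 0 / v (1/2))"
    using ratio vR R Q0 by (intro mult_left_mono) (auto simp: divide_le_eq)
  also have "\<dots> = (2 * (v 0 / v (1/2)) * (1 + 1 / (1 - t)) / (1 - t)^2) * (1/2)^n * wnorm v f"
    by (simp add: Q_def N_def field_simps)
  finally show ?thesis using it by simp
qed

lemma v_small:
  fixes v :: "real \<Rightarrow> real"
  assumes "(v \<longlongrightarrow> 0) (at_left (1::real))" "0 < \<delta>"
  shows "\<exists>r<1. \<forall>x. r < x \<longrightarrow> x < 1 \<longrightarrow> \<bar>v x\<bar> < \<delta>"
proof -
  have "eventually (\<lambda>x. dist (v x) 0 < \<delta>) (at_left (1::real))"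
    using tendstoD[OF assms] .
  then show ?thesis unfolding eventually_at_left_field by simp
qed

lemma H0_sub:
  assumes w: "is_weight v" and f: "f \<in> H0_v v"
  shows "f \<in> Hinf_v v"
proof -
  have fh: "f holomorphic_on ball 0 1" using f by (simp add: H0_v_def)
  have "\<exists>r<1. \<forall>z. r < cmod z \<and> cmod z < 1 \<longrightarrow> cmod (f z) * v (cmod z) < 1"
    using f by (simp add: H0_v_def)
  then obtain r where r: "r < 1" "\<And>z. r < cmod z \<Longrightarrow> cmod z < 1 \<Longrightarrow> cmod (f z) * v (cmod z) < 1"
    by blast
  define r' where "r' = max r 0"
  have r': "0 \<le> r'" "r' < 1" using r by (auto simp: r'_def)
  have sub: "cball 0 r' \<subseteq> ball (0::complex) 1" using r' by auto
  have "compact (f ` cball 0 r')"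
    by (rule compact_continuous_image)
       (use holomorphic_on_imp_continuous_on[OF fh] continuous_on_subset sub in auto)
  then obtain B where B: "\<And>y. y \<in> f ` cball 0 r' \<Longrightarrow> norm y \<le> B"
    using compact_imp_bounded bounded_iff by metis
  have "cmod (f z) * v (cmod z) \<le> max 1 (B * v 0)" if z: "z \<in> ball 0 1" for z
  proof (cases "cmod z \<le> r'")
    case True
    then have "cmod (f z) \<le> B" using B by auto
    moreover have "v (cmod z) \<le> v 0" "0 < v (cmod z)" using wt_mono[OF w, of 0 "cmod z"] wt_pos[OF w, of "cmod z"] z by auto
    ultimately have "cmod (f z) * v (cmod z) \<le> B * v 0"
      by (metis less_le mult_mono norm_ge_zero order_trans)
    then show ?thesis by simp
  next
    case False
    then have "r < cmod z" by (simp add: r'_def)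
    then have "cmod (f z) * v (cmod z) < 1" using r(2)[of z] z by simp
    then show ?thesis by simp
  qed
  then show ?thesis unfolding Hinf_v_def using fh by blast
qed

lemma bounded_Hinf:
  assumes w: "is_weight v" and hh: "h holomorphic_on ball 0 1" and B: "\<And>z. z \<in> ball 0 1 \<Longrightarrow> cmod (h z) \<le> B"
  shows "h \<in> Hinf_v v"
proof -
  have "cmod (h z) * v (cmod z) \<le> B * v 0" if z: "z \<in> ball 0 1" for z
  proof -
    have "v (cmod z) \<le> v 0" "0 < v (cmod z)" using wt_mono[OF w, of 0 "cmod z"] wt_pos[OF w, of "cmod z"] z by auto
    then show ?thesis using B[OF z] by (metis less_le mult_mono norm_ge_zero order_trans)
  qed
  then show ?thesis unfolding Hinf_v_def using hh by blast
qed

lemma bounded_H0: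
  assumes w: "is_weight v" and vl: "(v \<longlongrightarrow> 0) (at_left 1)"
    and hh: "h holomorphic_on ball 0 1" and B: "\<And>z. z \<in> ball 0 1 \<Longrightarrow> cmod (h z) \<le> B"
  shows "h \<in> H0_v v"
proof -
  have B0: "0 \<le> B" using B[of 0] by (meson centre_in_ball norm_ge_zero order_trans zero_less_one)
  have "\<exists>r<1. \<forall>z. r < cmod z \<and> cmod z < 1 \<longrightarrow> cmod (h z) * v (cmod z) < e" if e: "0 < e" for e
  proof -
    obtain r where r: "r < 1" "\<And>x. r < x \<Longrightarrow> x < 1 \<Longrightarrow> \<bar>v x\<bar> < e / (B + 1)"
      using v_small[OF vl, of "e / (B + 1)"] e B0 by auto
    have "cmod (h z) * v (cmod z) < e" if z: "r < cmod z" "cmod z < 1" for z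
    proof -
      have vz: "0 < v (cmod z)" using wt_pos[OF w, of "cmod z"] z by simp
      have "cmod (h z) * v (cmod z) \<le> B * v (cmod z)" using B[of z] z vz by (simp add: mult_right_mono)
      also have "\<dots> \<le> B * (e / (B + 1))"
        using r(2)[OF z] vz B0 by (intro mult_left_mono) auto
      also have "\<dots> < e" using e B0 by (simp add: field_simps)
      finally show ?thesis .
    qed
    then show ?thesis using r by blast
  qed
  then show ?thesis using hh by (simp add: H0_v_def)
qed

lemma C_Hinf:
  assumes w: "is_weight v" and t: "0 \<le> t" "t < 1" and f: "f \<in> Hinf_v v"
  shows "Cesaro_t t f \<in> Hinf_v v"
proof -
  have "cmod (Cesaro_t t f z) * v (cmod z) \<le> wnorm v f / (1 - t)" if "z \<in> ball 0 1" for z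
    using pb_point[OF w t f that, of 1] by simp
  then show ?thesis unfolding Hinf_v_def using C_holo[OF t Hinf_holo[OF f]] by blast
qed

lemma C_H0:
  assumes w: "is_weight v" and vl: "(v \<longlongrightarrow> 0) (at_left 1)" and t: "0 \<le> t" "t < 1" and f0: "f \<in> H0_v v"
  shows "Cesaro_t t f \<in> H0_v v"
proof -
  have f: "f \<in> Hinf_v v" by (rule H0_sub[OF w f0])
  define N where "N = wnorm v f"
  have N0: "0 \<le> N" using wn_nonneg[OF w f] by (simp add: N_def)
  have "\<exists>R<1. \<forall>z. R < cmod z \<and> cmod z < 1 \<longrightarrow> cmod (Cesaro_t t f z) * v (cmod z) < e" if e: "0 < e" for e
  proof -
    define \<epsilon> where "\<epsilon> = e * (1 - t) / 2"
    have \<epsilon>: "0 < \<epsilon>" using e t by (simp add: \<epsilon>_def)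
    have "\<exists>r<1. \<forall>z. r < cmod z \<and> cmod z < 1 \<longrightarrow> cmod (f z) * v (cmod z) < \<epsilon>"
      using f0 \<epsilon> by (simp add: H0_v_def)
    then obtain r1 where r1: "r1 < 1" "\<And>\<xi>. r1 < cmod \<xi> \<Longrightarrow> cmod \<xi> < 1 \<Longrightarrow> cmod (f \<xi>) * v (cmod \<xi>) < \<epsilon>"
      by blast
    define r where "r = max r1 0"
    have r: "0 \<le> r" "r < 1" "r1 \<le> r" using r1 by (auto simp: r_def)
    have vr: "0 < v r" using wt_pos[OF w] r by simp
    define \<delta> where "\<delta> = \<epsilon> * v r / (N + 1)"
    have \<delta>: "0 < \<delta>" using \<epsilon> vr N0 by (simp add: \<delta>_def)
    obtain r2 where r2: "r2 < 1" "\<And>x. r2 < x \<Longrightarrow> x < 1 \<Longrightarrow> \<bar>v x\<bar> < \<delta>"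
      using v_small[OF vl \<delta>] by auto
    define R where "R = max r r2"
    have R: "R < 1" using r r2 by (simp add: R_def)
    have "cmod (Cesaro_t t f z) * v (cmod z) < e" if z: "R < cmod z" "cmod z < 1" for z
    proof -
      define \<rho> where "\<rho> = cmod z"
      have \<rho>: "0 \<le> \<rho>" "\<rho> < 1" "r < \<rho>" "r2 < \<rho>" using z by (auto simp: \<rho>_def R_def)
      have vz: "0 < v \<rho>" using wt_pos[OF w] \<rho> by simp
      have vzd: "v \<rho> < \<delta>" using r2(2)[of \<rho>] \<rho> vz by simp
      define B where "B = \<epsilon> / v \<rho>"
      have B0: "0 \<le> B" using \<epsilon> vz by (simp add: B_def)
      have bd: "cmod (f w) \<le> B * Re (phi t (complex_of_real (cmod w)))" if wr: "cmod w \<le> \<rho>" for w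
      proof -
        have "cmod (f w) \<le> B"
        proof (cases "cmod w \<le> r")
          case True
          have "cmod (f w) \<le> N / v r" unfolding N_def by (rule f_bound[OF w f True r(2)])
          also have "\<dots> \<le> B"
          proof -
            have "N * v \<rho> \<le> (N + 1) * v \<rho>" using vz by simp
            also have "\<dots> \<le> (N + 1) * \<delta>" using vzd N0 by (intro mult_left_mono) auto
            also have "\<dots> = \<epsilon> * v r" using N0 by (simp add: \<delta>_def)
            finally have "N * v \<rho> \<le> \<epsilon> * v r" .
            then show ?thesis using vz vr by (simp add: B_def field_simps)
          qed
          finally show ?thesis .
        next
          case False
          then have "cmod (f w) * v (cmod w) < \<epsilon>" using r1(2)[of w] r wr \<rho> by auto
          moreover have "cmod (f w) * v \<rho> \<le> cmod (f w) * v (cmod w)"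
            using wt_mono[OF w, of "cmod w" \<rho>] wr \<rho> by (simp add: mult_left_mono)
          ultimately have "cmod (f w) * v \<rho> \<le> \<epsilon>" by simp
          then show ?thesis using vz by (simp add: B_def field_simps)
        qed
        also have "\<dots> \<le> B * Re (phi t (complex_of_real (cmod w)))"
        proof -
          have "0 < 1 - t * cmod w" "1 - t * cmod w \<le> 1" using tx_pos[OF t, of "cmod w"] wr \<rho> by auto
          then have "1 \<le> 1 / (1 - t * cmod w)" by simp
          then have "B * 1 \<le> B * (1 / (1 - t * cmod w))" using B0 by (rule mult_left_mono)
          then show ?thesis by (simp add: phi_real)
        qed
        finally show ?thesis .
      qed
      have zr: "cmod z \<le> \<rho>" by (simp add: \<rho>_def)
      have "cmod ((Cesaro_t t ^^ 1) f z) \<le> B * 1^1 * Re (phi t (complex_of_real (cmod z)))"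
        by (rule iter_bound[OF t phi_holo[OF t] phi_eig[OF t] Hinf_holo[OF f] \<rho>(2) bd zr])
      also have "\<dots> = B / (1 - t * \<rho>)" by (simp add: phi_real \<rho>_def)
      also have "\<dots> \<le> B / (1 - t)"
        using tx_pos[OF t \<rho>(1,2)] B0 t by (intro divide_left_mono) (auto intro!: mult_pos_pos)
      finally have "cmod (Cesaro_t t f z) * v \<rho> \<le> B / (1 - t) * v \<rho>"
        using vz by (intro mult_right_mono) auto
      also have "\<dots> = e / 2" using vz t by (simp add: B_def \<epsilon>_def)
      also have "\<dots> < e" using e by simp
      finally show ?thesis by (simp add: \<rho>_def)
    qed
    then show ?thesis using R by blast
  qed
  then show ?thesis using C_holo[OF t Hinf_holo[OF f]] by (simp add: H0_v_def)
qed

lemma geo_sum: "(\<Sum>m=1..n. (1/2::real)^m) = 1 - (1/2)^n"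
  by (induction n) (auto simp: field_simps)

lemma main_X:
  assumes w: "is_weight v" and t: "0 \<le> t" "t < 1"
    and XH: "X \<subseteq> Hinf_v v" and XC: "\<And>f. f \<in> X \<Longrightarrow> Cesaro_t t f \<in> X"
    and Xphi: "\<And>c. (\<lambda>z. c * phi t z) \<in> X" and Xpoly: "\<And>L. (\<lambda>z. 1 + L * z) \<in> X"
  shows "power_bounded_on X (wnorm v) (Cesaro_t t)
       \<and> uniformly_mean_ergodic_on X (wnorm v) (Cesaro_t t)
       \<and> \<not> supercyclic_on X (wnorm v) (Cesaro_t t)"
proof (intro conjI)
  show "power_bounded_on X (wnorm v) (Cesaro_t t)"
    unfolding power_bounded_on_def
  proof (intro conjI ballI exI allI)
    show "Cesaro_t t f \<in> X" if "f \<in> X" for f using XC that .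
    fix n f assume f: "f \<in> X"
    show "wnorm v ((Cesaro_t t ^^ n) f) \<le> 1 / (1 - t) * wnorm v f"
      using pb_point[OF w t subsetD[OF XH f]] by (intro wn_least) simp
  qed
  show "uniformly_mean_ergodic_on X (wnorm v) (Cesaro_t t)"
    unfolding uniformly_mean_ergodic_on_def
  proof (intro conjI ballI)
    show "Cesaro_t t f \<in> X" if "f \<in> X" for f using XC that .
  next
    show "\<exists>P. (\<forall>f\<in>X. P f \<in> X) \<and> (\<forall>e>0. \<exists>n0. \<forall>n\<ge>n0. \<forall>f\<in>X.
            wnorm v (\<lambda>z. cesaro_mean n (Cesaro_t t) f z - P f z) \<le> e * wnorm v f)"
  proof (rule exI[of _ "\<lambda>f z. f 0 * phi t z"], intro conjI ballI allI impI)
    show "(\<lambda>z. f 0 * phi t z) \<in> X" for f using Xphi .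
    define K where "K = 2 * (v 0 / v (1/2)) * (1 + 1 / (1 - t)) / (1 - t)^2"
    have K0: "0 \<le> K" using wt_pos[OF w, of 0] wt_pos[OF w, of "1/2"] t by (simp add: K_def)
    fix e :: real assume e: "0 < e"
    show "\<exists>n0. \<forall>n\<ge>n0. \<forall>f\<in>X. wnorm v (\<lambda>z. cesaro_mean n (Cesaro_t t) f z - f 0 * phi t z) \<le> e * wnorm v f"
    proof (intro exI allI impI ballI)
      fix n f assume n: "nat \<lceil>K / e\<rceil> + 1 \<le> n" and fX: "f \<in> X"
      have f: "f \<in> Hinf_v v" using XH fX by auto
      have N0: "0 \<le> wnorm v f" using wn_nonneg[OF w f] .
      have npos: "0 < n" using n by simp
      have Kn: "K / real n \<le> e"
      proof -
        have "K / e \<le> real n" using n by linarith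
        then show ?thesis using e npos by (simp add: field_simps)
      qed
      show "wnorm v (\<lambda>z. cesaro_mean n (Cesaro_t t) f z - f 0 * phi t z) \<le> e * wnorm v f"
      proof (rule wn_least)
        fix z :: complex assume z: "z \<in> ball 0 1"
        have vz: "0 \<le> v (cmod z)" using wt_pos[OF w, of "cmod z"] z by simp
        have eq: "cesaro_mean n (Cesaro_t t) f z - f 0 * phi t z
            = (\<Sum>m=1..n. ((Cesaro_t t ^^ m) f z - f 0 * phi t z)) / of_nat n"
          using npos by (simp add: cesaro_mean_def sum_subtractf field_simps)
        have "cmod (cesaro_mean n (Cesaro_t t) f z - f 0 * phi t z) * v (cmod z)
            = cmod (\<Sum>m=1..n. ((Cesaro_t t ^^ m) f z - f 0 * phi t z)) * v (cmod z) / real n"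
          unfolding eq by (simp add: norm_divide)
        also have "\<dots> \<le> (\<Sum>m=1..n. cmod ((Cesaro_t t ^^ m) f z - f 0 * phi t z) * v (cmod z)) / real n"
          using vz npos by (auto intro!: divide_right_mono mult_right_mono norm_sum simp: sum_distrib_right[symmetric])
        also have "\<dots> \<le> (\<Sum>m=1..n. K * (1/2)^m * wnorm v f) / real n"
          using me_point[OF w t f z] npos unfolding K_def by (intro divide_right_mono sum_mono) auto
        also have "\<dots> = K * wnorm v f * (\<Sum>m=1..n. (1/2::real)^m) / real n"
          by (simp add: sum_distrib_left sum_distrib_right mult_ac)
        also have "\<dots> \<le> K * wnorm v f * 1 / real n"
        proof -
          have gs: "(\<Sum>m=1..n. (1/2::real)^m) \<le> 1" using geo_sum[of n] by simp
          show ?thesis using K0 N0 npos gs by (intro divide_right_mono mult_left_mono) auto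
        qed
        also have "\<dots> = (K / real n) * wnorm v f" by simp
        also have "\<dots> \<le> e * wnorm v f" using Kn N0 by (rule mult_right_mono)
        finally show "cmod (cesaro_mean n (Cesaro_t t) f z - f 0 * phi t z) * v (cmod z) \<le> e * wnorm v f" .
      qed
    qed
  qed
  qed
  show "\<not> supercyclic_on X (wnorm v) (Cesaro_t t)"
  proof
    assume "supercyclic_on X (wnorm v) (Cesaro_t t)"
    then obtain g where gX: "g \<in> X"
      and sc: "\<And>f e. f \<in> X \<Longrightarrow> 0 < e \<Longrightarrow> \<exists>(c::complex) n. wnorm v (\<lambda>z. c * (Cesaro_t t ^^ n) g z - f z) < e"
      unfolding supercyclic_on_def by blast
    have g: "g \<in> Hinf_v v" using XH gX by auto
    have low: "cmod (c * (Cesaro_t t ^^ n) g z - f z) * v (cmod z) \<le> wnorm v (\<lambda>z. c * (Cesaro_t t ^^ n) g z - f z)"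
      if fX: "f \<in> X" and z: "z \<in> ball 0 1" for c n f z
    proof (rule wn_upper[OF _ z])
      have f: "f \<in> Hinf_v v" using XH fX by auto
      fix y :: complex assume y: "y \<in> ball 0 1"
      have vy: "0 \<le> v (cmod y)" using wt_pos[OF w, of "cmod y"] y by simp
      have "cmod (c * (Cesaro_t t ^^ n) g y - f y) * v (cmod y)
          \<le> (cmod c * cmod ((Cesaro_t t ^^ n) g y) + cmod (f y)) * v (cmod y)"
        using vy by (intro mult_right_mono) (auto simp: norm_mult intro: order_trans[OF norm_triangle_ineq4])
      also have "\<dots> = cmod c * (cmod ((Cesaro_t t ^^ n) g y) * v (cmod y)) + cmod (f y) * v (cmod y)"
        by (simp add: algebra_simps)
      also have "\<dots> \<le> cmod c * (wnorm v g / (1 - t)) + wnorm v f"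
        using pb_point[OF w t g y, of n] Hinf_upper[OF f y] by (intro add_mono mult_left_mono) auto
      finally show "cmod (c * (Cesaro_t t ^^ n) g y - f y) * v (cmod y) \<le> cmod c * (wnorm v g / (1 - t)) + wnorm v f" .
    qed
    define a where "a = g 0"
    have v0: "0 < v 0" using wt_pos[OF w, of 0] by simp
    have vh: "0 < v (1/2)" using wt_pos[OF w, of "1/2"] by simp
    have z0: "(0::complex) \<in> ball 0 1" by simp
    have zh: "(1/2::complex) \<in> ball 0 1" by simp
    show False
    proof (cases "a = 0")
      case True
      obtain c n where cn: "wnorm v (\<lambda>z. c * (Cesaro_t t ^^ n) g z - (1 + 0 * z)) < v 0"
        using sc[OF Xpoly[of 0] v0] by blast
      have "cmod (c * (Cesaro_t t ^^ n) g 0 - (1 + 0 * 0)) * v (cmod 0) \<le> wnorm v (\<lambda>z. c * (Cesaro_t t ^^ n) g z - (1 + 0 * z))"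
        by (rule low[OF Xpoly z0])
      moreover have "(Cesaro_t t ^^ n) g 0 = 0" using True by (simp add: iter_zero a_def)
      ultimately show False using cn by simp
    next
      case False
      define G where "G = wnorm v g / ((1 - t) * v (1/2))"
      have G0: "0 \<le> G" using wn_nonneg[OF w g] t vh by (simp add: G_def)
      have Gb: "cmod ((Cesaro_t t ^^ n) g (1/2)) \<le> G" for n
      proof -
        have "cmod ((Cesaro_t t ^^ n) g (1/2)) * v (1/2) \<le> wnorm v g / (1 - t)"
          using pb_point[OF w t g zh, of n] by simp
        then show ?thesis using vh t by (simp add: G_def field_simps)
      qed
      have ap: "0 < cmod a" using False by simp
      define L where "L = 2 * (2 * G / cmod a + 3)"
      define e where "e = min (v 0) (v (1/2))"
      have e: "0 < e" using v0 vh by (simp add: e_def)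
      obtain c n where cn: "wnorm v (\<lambda>z. c * (Cesaro_t t ^^ n) g z - (1 + complex_of_real L * z)) < e"
        using sc[OF Xpoly e] by blast
      have "cmod (c * (Cesaro_t t ^^ n) g 0 - (1 + complex_of_real L * 0)) * v (cmod 0) < e"
        using low[OF Xpoly[of "complex_of_real L"] z0, of c n] cn by linarith
      then have "cmod (c * a - 1) * v 0 < v 0" using e_def by (simp add: iter_zero a_def)
      then have "cmod (c * a - 1) < 1" using v0 by simp
      then have "cmod (c * a) < 2" using norm_triangle_ineq2[of "c * a" 1] by simp
      then have c2: "cmod c * cmod a < 2" by (simp add: norm_mult)
      have "cmod (c * (Cesaro_t t ^^ n) g (1/2) - (1 + complex_of_real L * (1/2))) * v (cmod (1/2::complex)) < e"
        using low[OF Xpoly[of "complex_of_real L"] zh, of c n] cn by linarith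
      then have "cmod (c * (Cesaro_t t ^^ n) g (1/2) - (1 + complex_of_real L * (1/2))) * v (1/2) < v (1/2)"
        using e_def by simp
      then have d1: "cmod (c * (Cesaro_t t ^^ n) g (1/2) - (1 + complex_of_real L * (1/2))) < 1" using vh by simp
      have "cmod (1 + complex_of_real L * (1/2)) \<le> cmod (c * (Cesaro_t t ^^ n) g (1/2)) + cmod (c * (Cesaro_t t ^^ n) g (1/2) - (1 + complex_of_real L * (1/2)))"
        by (metis norm_triangle_ineq2 add.commute diff_le_eq norm_minus_commute)
      also have "\<dots> < cmod c * G + 1"
        using d1 Gb[of n] by (intro add_le_less_mono) (auto simp: norm_mult mult_left_mono)
      also have "\<dots> \<le> 2 * G / cmod a + 1"
      proof -
        have "cmod c \<le> 2 / cmod a" using c2 ap by (simp add: field_simps)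
        then have "cmod c * G \<le> 2 / cmod a * G" using G0 by (rule mult_right_mono)
        then show ?thesis by simp
      qed
      finally have "cmod (1 + complex_of_real L * (1/2)) < 2 * G / cmod a + 1" .
      moreover have "1 + complex_of_real L * (1/2) = complex_of_real (2 * G / cmod a + 4)"
        by (simp add: L_def field_simps)
      ultimately have "\<bar>2 * G / cmod a + 4\<bar> < 2 * G / cmod a + 1" by (metis norm_of_real)
      moreover have "0 \<le> 2 * G / cmod a + 4" using G0 ap by simp
      ultimately show False by linarith
    qed
  qed
qed

lemma phi_mult_bd:
  assumes t: "0 \<le> t" "t < 1" and z: "z \<in> ball 0 1"
  shows "cmod (c * phi t z) \<le> cmod c * (1 / (1 - t))"
proof -
  have "cmod c * cmod (phi t z) \<le> cmod c * (1 / (1 - t))"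
    using phi_norm[OF t, of z] z by (intro mult_left_mono) auto
  then show ?thesis by (simp add: norm_mult)
qed

lemma poly_bd:
  assumes z: "z \<in> ball 0 1"
  shows "cmod (1 + L * z) \<le> 1 + cmod L"
proof -
  have "cmod (1 + L * z) \<le> 1 + cmod L * cmod z" by (metis norm_mult norm_one norm_triangle_ineq)
  also have "\<dots> \<le> 1 + cmod L" using z by (simp add: mult_left_le)
  finally show ?thesis .
qed

theorem proposition3p2:
  fixes v :: "real \<Rightarrow> real" and t :: real
  assumes "is_weight v"
    and "(v \<longlongrightarrow> 0) (at_left 1)"
    and "0 \<le> t" and "t < 1"
  shows "power_bounded_on (Hinf_v v) (wnorm v) (Cesaro_t t)
       \<and> uniformly_mean_ergodic_on (Hinf_v v) (wnorm v) (Cesaro_t t)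
       \<and> \<not> supercyclic_on (Hinf_v v) (wnorm v) (Cesaro_t t)
       \<and> power_bounded_on (H0_v v) (wnorm v) (Cesaro_t t)
       \<and> uniformly_mean_ergodic_on (H0_v v) (wnorm v) (Cesaro_t t)
       \<and> \<not> supercyclic_on (H0_v v) (wnorm v) (Cesaro_t t)"
proof -
  note w = assms(1) and vl = assms(2) and t = assms(3,4)
  have ph: "(\<lambda>z. c * phi t z) holomorphic_on ball 0 1" for c
    using phi_holo[OF t] by (intro holomorphic_intros)
  have ph2: "(\<lambda>z. 1 + L * z) holomorphic_on ball 0 1" for L :: complex
    by (intro holomorphic_intros)
  have A: "power_bounded_on (Hinf_v v) (wnorm v) (Cesaro_t t)
       \<and> uniformly_mean_ergodic_on (Hinf_v v) (wnorm v) (Cesaro_t t)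
       \<and> \<not> supercyclic_on (Hinf_v v) (wnorm v) (Cesaro_t t)"
  proof (rule main_X[OF w t])
    show "Hinf_v v \<subseteq> Hinf_v v" by simp
    show "\<And>f. f \<in> Hinf_v v \<Longrightarrow> Cesaro_t t f \<in> Hinf_v v" using C_Hinf[OF w t] .
    show "(\<lambda>z. c * phi t z) \<in> Hinf_v v" for c
      by (rule bounded_Hinf[OF w ph phi_mult_bd[OF t]])
    show "(\<lambda>z. 1 + L * z) \<in> Hinf_v v" for L
      by (rule bounded_Hinf[OF w ph2 poly_bd])
  qed
  have B: "power_bounded_on (H0_v v) (wnorm v) (Cesaro_t t)
       \<and> uniformly_mean_ergodic_on (H0_v v) (wnorm v) (Cesaro_t t)
       \<and> \<not> supercyclic_on (H0_v v) (wnorm v) (Cesaro_t t)"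
  proof (rule main_X[OF w t])
    show "H0_v v \<subseteq> Hinf_v v" using H0_sub[OF w] by blast
    show "\<And>f. f \<in> H0_v v \<Longrightarrow> Cesaro_t t f \<in> H0_v v" using C_H0[OF w vl t] .
    show "(\<lambda>z. c * phi t z) \<in> H0_v v" for c
      by (rule bounded_H0[OF w vl ph phi_mult_bd[OF t]])
    show "(\<lambda>z. 1 + L * z) \<in> H0_v v" for L
      by (rule bounded_H0[OF w vl ph2 poly_bd])
  qed
  show ?thesis using A B by blast
qed

end
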